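(* Let $\alpha\in L^1(\mathbb{R})$ be even with $\alpha\ge0$ almost everywhere, and let $w\in C^1(\mathbb{R})$ be odd with $w(0)=0$; set $W(\eta)=\int_0^\eta w(\rho)\,d\rho$. Let $\varphi,\psi\in L^1(\mathbb{R})\cap L^\infty(\mathbb{R})$. Suppose there is some $\nu>0$ such that $$\eta\, w(\eta)\le 2(1+2\nu)W(\eta)\quad\text{for all }\eta\in\mathbb{R},$$ and $$E(0)=\frac12\|\psi\|_2^2+\frac12\int_{\mathbb{R}^2}\alpha(y-x)\,W\big(\varphi(y)-\varphi(x)\big)\,dy\,dx<0.$$ Then the solution $u$ (in $C^2([0,T],L^1(\mathbb{R})\cap L^\infty(\mathbb{R}))$ for $T$ less than the maximal existence time) of the Cauchy problem $$u_{tt}(x,t)=\int_{\mathbb{R}} \alpha(y-x)\, w\big(u(y,t)-u(x,t)\big)\,dy,\quad x\in\mathbb{R},\ t>0,\qquad u(x,0)=\varphi(x),\ u_t(x,0)=\psi(x)$$ blows up in finite time, i.e. it does not exist globally in time. *)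

theory Defs
  imports "HOL-Probability.Probability"
begin

text \<open>The space X = L^1(R) \<inter> L^\<infinity>(R), elements represented by (Borel measurable)
  representatives real \<Rightarrow> real.\<close>

definition inLIL :: "(real \<Rightarrow> real) \<Rightarrow> bool" where
  "inLIL f \<longleftrightarrow> f \<in> borel_measurable lborel \<and> integrable lborel f
     \<and> esssup lborel (\<lambda>x. ereal \<bar>f x\<bar>) < \<infinity>"

text \<open>Norm of X: \<parallel>f\<parallel>_1 + \<parallel>f\<parallel>_\<infinity> (extended-real valued, so it makes sense for any f).\<close>
definition Xnorm :: "(real \<Rightarrow> real) \<Rightarrow> ereal" where
  "Xnorm f = enn2ereal (\<integral>\<^sup>+ x. ennreal \<bar>f x\<bar> \<partial>lborel) + esssup lborel (\<lambda>x. ereal \<bar>f x\<bar>)"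

definition X_continuous :: "(real \<Rightarrow> real \<Rightarrow> real) \<Rightarrow> bool" where
  "X_continuous u \<longleftrightarrow> (\<forall>t\<ge>0. ((\<lambda>s. Xnorm (\<lambda>x. u s x - u t x)) \<longlongrightarrow> 0) (at t within {0..}))"

definition X_has_deriv :: "(real \<Rightarrow> real \<Rightarrow> real) \<Rightarrow> (real \<Rightarrow> real \<Rightarrow> real) \<Rightarrow> bool" where
  "X_has_deriv u v \<longleftrightarrow> (\<forall>t\<ge>0.
     ((\<lambda>s. Xnorm (\<lambda>x. (u s x - u t x) / (s - t) - v t x)) \<longlongrightarrow> 0) (at t within {0..}))"

text \<open>W(\<eta>) = \<integral>_0^\<eta> w (oriented interval integral).\<close>
definition Wpot :: "(real \<Rightarrow> real) \<Rightarrow> real \<Rightarrow> real" where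
  "Wpot w \<eta> = (LBINT \<rho>=0..\<eta>. w \<rho>)"

definition energy0 :: "(real \<Rightarrow> real) \<Rightarrow> (real \<Rightarrow> real) \<Rightarrow> (real \<Rightarrow> real) \<Rightarrow> (real \<Rightarrow> real) \<Rightarrow> real" where
  "energy0 \<alpha> w \<phi> \<psi> = (1/2) * (LINT x|lborel. (\<psi> x)\<^sup>2)
     + (1/2) * (LINT x|lborel. LINT y|lborel. \<alpha> (y - x) * Wpot w (\<phi> y - \<phi> x))"

text \<open>A global-in-time solution: u \<in> C^2([0,\<infinity>), L^1 \<inter> L^\<infinity>) with X-valued derivatives
  u1 = u_t, u2 = u_tt, solving the equation (as an identity in X, i.e. a.e. in x)
  for every t \<ge> 0, with the initial data (as elements of X).\<close>
definition global_solution ::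
  "(real \<Rightarrow> real) \<Rightarrow> (real \<Rightarrow> real) \<Rightarrow> (real \<Rightarrow> real) \<Rightarrow> (real \<Rightarrow> real)
    \<Rightarrow> (real \<Rightarrow> real \<Rightarrow> real) \<Rightarrow> (real \<Rightarrow> real \<Rightarrow> real) \<Rightarrow> (real \<Rightarrow> real \<Rightarrow> real) \<Rightarrow> bool" where
  "global_solution \<alpha> w \<phi> \<psi> u u1 u2 \<longleftrightarrow>
     (\<forall>t\<ge>0. inLIL (u t) \<and> inLIL (u1 t) \<and> inLIL (u2 t))
     \<and> X_has_deriv u u1 \<and> X_has_deriv u1 u2 \<and> X_continuous u2
     \<and> (\<forall>t\<ge>0. AE x in lborel. u2 t x = (LINT y|lborel. \<alpha> (y - x) * w (u t y - u t x)))
     \<and> (AE x in lborel. u 0 x = \<phi> x)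
     \<and> (AE x in lborel. u1 0 x = \<psi> x)"

end

theory Submission
  imports Defs
begin


lemma lip_deriv:
  fixes f f' :: "real \<Rightarrow> real"
  assumes "\<And>x. lo \<le> x \<Longrightarrow> x \<le> hi \<Longrightarrow> (f has_real_derivative f' x) (at x)"
    and "\<And>x. lo \<le> x \<Longrightarrow> x \<le> hi \<Longrightarrow> \<bar>f' x\<bar> \<le> K"
    and "lo \<le> a" "a \<le> hi" "lo \<le> b" "b \<le> hi"
  shows "\<bar>f b - f a\<bar> \<le> K * \<bar>b - a\<bar>"
proof -
  have main: "\<bar>f d - f c\<bar> \<le> K * \<bar>d - c\<bar>" if "lo \<le> c" "c < d" "d \<le> hi" for c d
  proof -
    have "\<exists>z. c < z \<and> z < d \<and> f d - f c = (d - c) * f' z"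
      by (rule MVT2) (use assms(1) that in auto)
    then obtain z where z: "c < z" "z < d" "f d - f c = (d - c) * f' z" by blast
    have "\<bar>f' z\<bar> \<le> K" using assms(2) z that by auto
    then have "\<bar>(d - c) * f' z\<bar> \<le> \<bar>d - c\<bar> * K"
      by (simp add: abs_mult mult_left_mono)
    then show ?thesis using z by (simp add: mult.commute)
  qed
  show ?thesis
  proof (cases a b rule: linorder_cases)
    case less then show ?thesis using main assms by blast
  next
    case equal then show ?thesis by simp
  next
    case greater then show ?thesis using main[of b a] assms by (simp add: abs_minus_commute)
  qed
qed

lemma W_deriv:
  assumes "continuous_on UNIV w"
  shows "(Wpot w has_real_derivative w x) (at x)"
proof -
  have "((\<lambda>u. LBINT y=ereal 0..ereal u. w y) has_vector_derivative (w x)) (at x within {-\<bar>x\<bar>-1..\<bar>x\<bar>+1})"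
    by (rule interval_integral_FTC2) (auto intro: continuous_on_subset[OF assms])
  moreover have "at x within {-\<bar>x\<bar>-1..\<bar>x\<bar>+1} = at x"
    by (rule at_within_Icc_at) auto
  ultimately show ?thesis
    unfolding Wpot_def has_real_derivative_iff_has_vector_derivative by (simp add: zero_ereal_def)
qed

lemma W_0: "Wpot w 0 = 0"
  by (simp add: Wpot_def zero_ereal_def)

lemma cont_bound:
  fixes g :: "real \<Rightarrow> real"
  assumes "continuous_on UNIV g"
  shows "\<exists>C\<ge>0. \<forall>x. \<bar>x\<bar> \<le> R \<longrightarrow> \<bar>g x\<bar> \<le> C"
proof -
  have "compact (g ` cball 0 R)"
    by (rule compact_continuous_image) (auto intro: continuous_on_subset[OF assms])
  then obtain C where C: "\<forall>y\<in>g ` cball 0 R. norm y \<le> C"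
    using compact_imp_bounded bounded_iff by metis
  have "\<bar>g x\<bar> \<le> max C 0" if "\<bar>x\<bar> \<le> R" for x
  proof -
    have "x \<in> cball 0 R" using that by (simp add: dist_real_def)
    then show ?thesis using C by force
  qed
  then show ?thesis by (intro exI[of _ "max C 0"]) auto
qed

lemma AE_pair_fst:
  assumes "AE x in lborel. P x"
  shows "AE p in (lborel::real measure) \<Otimes>\<^sub>M (lborel::real measure). P (fst p)"
proof -
  obtain N where N: "N \<in> null_sets lborel" "{x \<in> space lborel. \<not> P x} \<subseteq> N"
    using assms unfolding eventually_ae_filter by auto
  have "N \<times> (UNIV::real set) \<in> null_sets (lborel \<Otimes>\<^sub>M lborel)"
    using N(1) by (intro lborel.times_in_null_sets1) auto
  then show ?thesis
    by (rule AE_I') (use N(2) in \<open>auto simp: space_pair_measure\<close>)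
qed

lemma AE_pair_snd:
  assumes "AE x in lborel. P x"
  shows "AE p in (lborel::real measure) \<Otimes>\<^sub>M (lborel::real measure). P (snd p)"
proof -
  obtain N where N: "N \<in> null_sets lborel" "{x \<in> space lborel. \<not> P x} \<subseteq> N"
    using assms unfolding eventually_ae_filter by auto
  have "(UNIV::real set) \<times> N \<in> null_sets (lborel \<Otimes>\<^sub>M lborel)"
    using N(1) by (intro lborel.times_in_null_sets2) auto
  then show ?thesis
    by (rule AE_I') (use N(2) in \<open>auto simp: space_pair_measure\<close>)
qed

lemma AE_translate:
  fixes P :: "real \<Rightarrow> bool"
  assumes "Measurable.pred borel P" "AE z in lborel. P z"
  shows "AE y in lborel. P (y - x)"
  using AE_borel_affine[of 1 P "-x"] assms by simp

lemma integral_translate: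
  fixes f :: "real \<Rightarrow> real"
  shows "(LINT y|lborel. f (y - x)) = (LINT z|lborel. f z)"
  using lborel_integral_real_affine[of 1 f "-x"] by simp

lemma integrable_translate:
  fixes f :: "real \<Rightarrow> real"
  shows "integrable lborel f \<Longrightarrow> integrable lborel (\<lambda>y. f (y - x))"
  using lborel_integrable_real_affine[of f 1 "-x"] by simp

lemma esssup_nonneg: fixes f :: "real \<Rightarrow> real" shows "0 \<le> esssup lborel (\<lambda>x. ereal \<bar>f x\<bar>)"
proof -
  have "esssup lborel (\<lambda>x::real. (0::ereal)) \<le> esssup lborel (\<lambda>x. ereal \<bar>f x\<bar>)"
    using esssup_mono[of "\<lambda>x. 0::ereal" lborel "\<lambda>x. ereal \<bar>f x\<bar>"] by simp
  moreover have "esssup lborel (\<lambda>x::real. (0::ereal)) = 0"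
    by (rule esssup_const) simp
  ultimately show ?thesis by simp
qed

lemma inLIL_bound:
  fixes f :: "real \<Rightarrow> real"
  assumes "inLIL f"
  shows "\<exists>M\<ge>0. AE x in lborel. \<bar>f x\<bar> \<le> M"
proof -
  let ?e = "esssup lborel (\<lambda>x. ereal \<bar>f x\<bar>)"
  have lt: "?e < \<infinity>" using assms by (simp add: inLIL_def)
  have ge: "0 \<le> ?e" by (rule esssup_nonneg)
  obtain m where m: "?e = ereal m" using lt ge by (cases ?e) auto
  have "AE x in lborel. ereal \<bar>f x\<bar> \<le> ?e" by (rule esssup_AE)
  then have "AE x in lborel. \<bar>f x\<bar> \<le> m" by (simp add: m)
  moreover have "m \<ge> 0" using ge m by simp
  ultimately show ?thesis by blast
qed


definition smallX :: "real filter \<Rightarrow> (real \<Rightarrow> real \<Rightarrow> real) \<Rightarrow> bool" where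
  "smallX F h \<longleftrightarrow> (\<forall>e>0. eventually (\<lambda>s. integrable lborel (h s) \<and> (LINT x|lborel. \<bar>h s x\<bar>) \<le> e
      \<and> (AE x in lborel. \<bar>h s x\<bar> \<le> e)) F)"

definition bndX :: "real filter \<Rightarrow> (real \<Rightarrow> real \<Rightarrow> real) \<Rightarrow> real \<Rightarrow> bool" where
  "bndX F h M \<longleftrightarrow> eventually (\<lambda>s. integrable lborel (h s) \<and> (LINT x|lborel. \<bar>h s x\<bar>) \<le> M
      \<and> (AE x in lborel. \<bar>h s x\<bar> \<le> M)) F"

lemma Xnorm_small:
  assumes lim: "((\<lambda>s. Xnorm (h s)) \<longlongrightarrow> 0) F" and int: "eventually (\<lambda>s. integrable lborel (h s)) F"
  shows "smallX F h"
  unfolding smallX_def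
proof (intro allI impI)
  fix e :: real assume e: "e > 0"
  have "eventually (\<lambda>s. Xnorm (h s) < ereal e) F"
    using order_tendstoD(2)[OF lim, of "ereal e"] e by simp
  then show "eventually (\<lambda>s. integrable lborel (h s) \<and> (LINT x|lborel. \<bar>h s x\<bar>) \<le> e
      \<and> (AE x in lborel. \<bar>h s x\<bar> \<le> e)) F"
    using int
  proof eventually_elim
    case (elim s)
    let ?N = "\<integral>\<^sup>+x. ennreal \<bar>h s x\<bar> \<partial>lborel"
    let ?E = "esssup lborel (\<lambda>x. ereal \<bar>h s x\<bar>)"
    have E0: "0 \<le> ?E" by (rule esssup_nonneg)
    have N0: "0 \<le> enn2ereal ?N" by simp
    have sum: "enn2ereal ?N + ?E < ereal e" using elim by (simp add: Xnorm_def)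
    have "enn2ereal ?N \<le> enn2ereal ?N + ?E" using E0 by (rule add_increasing2) simp
    then have Nl: "enn2ereal ?N < ereal e" using sum by order
    have "?E \<le> enn2ereal ?N + ?E" using N0 by (rule add_increasing) simp
    then have El: "?E < ereal e" using sum by order
    have "AE x in lborel. ereal \<bar>h s x\<bar> \<le> ?E" by (rule esssup_AE)
    then have "AE x in lborel. ereal \<bar>h s x\<bar> < ereal e"
      by eventually_elim (rule le_less_trans[OF _ El])
    then have ae: "AE x in lborel. \<bar>h s x\<bar> \<le> e"
      by eventually_elim simp
    have "?N = ennreal (LINT x|lborel. \<bar>h s x\<bar>)"
      by (rule nn_integral_eq_integral) (use elim in auto)
    then have "enn2ereal ?N = ereal (LINT x|lborel. \<bar>h s x\<bar>)"
      by simp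
    then have "(LINT x|lborel. \<bar>h s x\<bar>) \<le> e" using Nl by simp
    then show ?case using ae elim by simp
  qed
qed

lemma ev_within: "eventually (\<lambda>s. s \<ge> 0 \<and> s \<noteq> t) (at t within {0..})"
  by (simp add: eventually_at_filter)

lemma inLIL_int: "inLIL f \<Longrightarrow> integrable lborel f"
  by (simp add: inLIL_def)

lemma inLIL_meas: "inLIL f \<Longrightarrow> f \<in> borel_measurable borel"
  by (simp add: inLIL_def)

lemma deriv_small:
  assumes inL: "\<And>t. t \<ge> 0 \<Longrightarrow> inLIL (a t)" "\<And>t. t \<ge> 0 \<Longrightarrow> inLIL (a1 t)"
    and d: "X_has_deriv a a1" and t: "t \<ge> 0"
  shows "smallX (at t within {0..}) (\<lambda>s x. (a s x - a t x) / (s - t) - a1 t x)"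
proof (rule Xnorm_small)
  show "((\<lambda>s. Xnorm (\<lambda>x. (a s x - a t x) / (s - t) - a1 t x)) \<longlongrightarrow> 0) (at t within {0..})"
    using d t unfolding X_has_deriv_def by blast
  show "eventually (\<lambda>s. integrable lborel (\<lambda>x. (a s x - a t x) / (s - t) - a1 t x)) (at t within {0..})"
    using ev_within[of t]
  proof eventually_elim
    case (elim s)
    have "integrable lborel (a s)" "integrable lborel (a t)" "integrable lborel (a1 t)"
      using inL elim t inLIL_int by auto
    then show ?case by simp
  qed
qed

lemma small_bnd:
  assumes sm: "smallX F (\<lambda>s x. k s x - g x)" and g: "integrable lborel g" and G: "AE x in lborel. \<bar>g x\<bar> \<le> G"
  shows "bndX F k (1 + max (LINT x|lborel. \<bar>g x\<bar>) G)"
proof -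
  have "eventually (\<lambda>s. integrable lborel (\<lambda>x. k s x - g x) \<and> (LINT x|lborel. \<bar>k s x - g x\<bar>) \<le> 1
      \<and> (AE x in lborel. \<bar>k s x - g x\<bar> \<le> 1)) F"
    using sm unfolding smallX_def by auto
  then show ?thesis unfolding bndX_def
  proof eventually_elim
    case (elim s)
    have ks: "k s = (\<lambda>x. (k s x - g x) + g x)" by auto
    have "integrable lborel (\<lambda>x. (k s x - g x) + g x)"
      by (rule Bochner_Integration.integrable_add) (use elim g in auto)
    then have ik: "integrable lborel (k s)" by simp
    have "(LINT x|lborel. \<bar>k s x\<bar>) \<le> (LINT x|lborel. \<bar>k s x - g x\<bar> + \<bar>g x\<bar>)"
      by (rule integral_mono) (use elim g ik in auto)
    also have "\<dots> = (LINT x|lborel. \<bar>k s x - g x\<bar>) + (LINT x|lborel. \<bar>g x\<bar>)"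
      by (rule Bochner_Integration.integral_add) (use elim g in auto)
    also have "\<dots> \<le> 1 + max (LINT x|lborel. \<bar>g x\<bar>) G" using elim by auto
    finally have l1: "(LINT x|lborel. \<bar>k s x\<bar>) \<le> 1 + max (LINT x|lborel. \<bar>g x\<bar>) G" .
    have ae1: "AE x in lborel. \<bar>k s x - g x\<bar> \<le> 1" using elim by simp
    have "AE x in lborel. \<bar>k s x\<bar> \<le> 1 + max (LINT x|lborel. \<bar>g x\<bar>) G"
      using ae1 G by eventually_elim auto
    then show ?case using l1 ik by simp
  qed
qed

lemma bnd_const:
  assumes g: "integrable lborel g" and G: "AE x in lborel. \<bar>g x\<bar> \<le> G"
  shows "bndX F (\<lambda>s. g) (max (LINT x|lborel. \<bar>g x\<bar>) G)"
proof -
  have "AE x in lborel. \<bar>g x\<bar> \<le> max (LINT x|lborel. \<bar>g x\<bar>) G"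
    using G by eventually_elim auto
  then show ?thesis unfolding bndX_def using g by simp
qed

lemma bnd_inLIL:
  assumes "inLIL g"
  shows "\<exists>M. bndX F (\<lambda>s. g) M"
  using bnd_const[OF inLIL_int[OF assms]] inLIL_bound[OF assms] by blast

lemma small_bnd_lim:
  assumes sm: "smallX F h" and bd: "bndX F k M"
  shows "((\<lambda>s. LINT x|lborel. h s x * k s x) \<longlongrightarrow> 0) F"
  unfolding tendsto_iff
proof (intro allI impI)
  fix e :: real assume e: "e > 0"
  define e' where "e' = e / (2 * (\<bar>M\<bar> + 1))"
  have e': "e' > 0" using e by (simp add: e'_def add_pos_nonneg)
  have "eventually (\<lambda>s. integrable lborel (h s) \<and> (LINT x|lborel. \<bar>h s x\<bar>) \<le> e'
      \<and> (AE x in lborel. \<bar>h s x\<bar> \<le> e')) F"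
    using sm e' unfolding smallX_def by auto
  then show "eventually (\<lambda>s. dist (LINT x|lborel. h s x * k s x) 0 < e) F"
    using bd unfolding bndX_def
  proof eventually_elim
    case (elim s)
    have "\<bar>LINT x|lborel. h s x * k s x\<bar> \<le> (LINT x|lborel. \<bar>h s x * k s x\<bar>)"
      by (rule integral_abs_bound)
    also have "\<dots> \<le> (LINT x|lborel. \<bar>M\<bar> * \<bar>h s x\<bar>)"
    proof (rule integral_mono_AE')
      have kb: "AE x in lborel. \<bar>k s x\<bar> \<le> M" using elim by simp
      show "integrable lborel (\<lambda>x. \<bar>M\<bar> * \<bar>h s x\<bar>)" using elim by auto
      show "AE x in lborel. \<bar>h s x * k s x\<bar> \<le> \<bar>M\<bar> * \<bar>h s x\<bar>"
        using kb
      proof eventually_elim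
        case (elim x)
        have "\<bar>k s x\<bar> \<le> \<bar>M\<bar>" using elim by linarith
        then have "\<bar>h s x\<bar> * \<bar>k s x\<bar> \<le> \<bar>h s x\<bar> * \<bar>M\<bar>" by (rule mult_left_mono) simp
        then show ?case by (simp add: abs_mult mult.commute)
      qed
      show "AE x in lborel. 0 \<le> \<bar>M\<bar> * \<bar>h s x\<bar>" by simp
    qed
    also have "\<dots> = \<bar>M\<bar> * (LINT x|lborel. \<bar>h s x\<bar>)" by simp
    also have "\<dots> \<le> \<bar>M\<bar> * e'" using elim by (intro mult_left_mono) auto
    also have "\<dots> < e"
    proof -
      have "\<bar>M\<bar> * e' \<le> (\<bar>M\<bar> + 1) * e'" using e' by (intro mult_right_mono) auto
      also have "\<dots> = e / 2" using e by (simp add: e'_def field_simps)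
      finally show ?thesis using e by simp
    qed
    finally show ?case by simp
  qed
qed

lemma small_bnd_lim2:
  assumes sm: "smallX F h" and bd: "bndX F k M"
  shows "((\<lambda>s. LINT x|lborel. k s x * h s x) \<longlongrightarrow> 0) F"
  using small_bnd_lim[OF sm bd] by (simp add: mult.commute)

lemma curve_bnd:
  assumes inL: "\<And>t. t \<ge> 0 \<Longrightarrow> inLIL (a t)" "\<And>t. t \<ge> 0 \<Longrightarrow> inLIL (a1 t)"
    and d: "X_has_deriv a a1" and t: "t \<ge> 0"
  shows "\<exists>M>0. bndX (at t within {0..}) (\<lambda>s x. (a s x - a t x) / (s - t)) M"
proof -
  obtain G where G: "AE x in lborel. \<bar>a1 t x\<bar> \<le> G" using inLIL_bound[OF inL(2)[OF t]] by blast
  have "bndX (at t within {0..}) (\<lambda>s x. (a s x - a t x) / (s - t)) (1 + max (LINT x|lborel. \<bar>a1 t x\<bar>) G)"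
    by (rule small_bnd[OF deriv_small[OF inL d t] inLIL_int[OF inL(2)[OF t]] G])
  moreover have "0 \<le> (LINT x|lborel. \<bar>a1 t x\<bar>)" by (rule integral_nonneg_AE) simp
  then have "1 + max (LINT x|lborel. \<bar>a1 t x\<bar>) G > 0" by linarith
  ultimately show ?thesis by blast
qed

lemma curve_cont:
  assumes inL: "\<And>t. t \<ge> 0 \<Longrightarrow> inLIL (a t)" "\<And>t. t \<ge> 0 \<Longrightarrow> inLIL (a1 t)"
    and d: "X_has_deriv a a1" and t: "t \<ge> 0"
  shows "smallX (at t within {0..}) (\<lambda>s x. a s x - a t x)"
  unfolding smallX_def
proof (intro allI impI)
  fix e :: real assume e: "e > 0"
  obtain M where M: "M > 0" "bndX (at t within {0..}) (\<lambda>s x. (a s x - a t x) / (s - t)) M"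
    using curve_bnd[OF inL d t] by blast
  have lim: "((\<lambda>s. \<bar>s - t\<bar>) \<longlongrightarrow> \<bar>t - t\<bar>) (at t within {0..})"
    by (intro tendsto_intros)
  have "eventually (\<lambda>s. \<bar>s - t\<bar> < e / M) (at t within {0..})"
    using order_tendstoD(2)[OF lim, of "e / M"] e M by simp
  then show "eventually (\<lambda>s. integrable lborel (\<lambda>x. a s x - a t x) \<and> (LINT x|lborel. \<bar>a s x - a t x\<bar>) \<le> e
      \<and> (AE x in lborel. \<bar>a s x - a t x\<bar> \<le> e)) (at t within {0..})"
    using M(2) ev_within[of t] unfolding bndX_def
  proof eventually_elim
    case (elim s)
    have st: "s - t \<noteq> 0" using elim by simp
    have eq: "\<And>x. \<bar>a s x - a t x\<bar> = \<bar>s - t\<bar> * \<bar>(a s x - a t x) / (s - t)\<bar>"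
      using st by (simp add: abs_divide)
    have "integrable lborel (a s)" "integrable lborel (a t)"
      using inL elim t inLIL_int by auto
    then have i: "integrable lborel (\<lambda>x. a s x - a t x)" by simp
    have sM: "\<bar>s - t\<bar> * M \<le> e" using elim M by (simp add: pos_less_divide_eq less_imp_le)
    have "(LINT x|lborel. \<bar>a s x - a t x\<bar>) = \<bar>s - t\<bar> * (LINT x|lborel. \<bar>(a s x - a t x) / (s - t)\<bar>)"
      by (simp only: eq integral_mult_right_zero)
    also have "\<dots> \<le> \<bar>s - t\<bar> * M" using elim by (intro mult_left_mono) auto
    finally have l1: "(LINT x|lborel. \<bar>a s x - a t x\<bar>) \<le> e" using sM by simp
    have qb: "AE x in lborel. \<bar>(a s x - a t x) / (s - t)\<bar> \<le> M" using elim by simp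
    have "AE x in lborel. \<bar>a s x - a t x\<bar> \<le> e"
      using qb
    proof eventually_elim
      case (elim x)
      have "\<bar>s - t\<bar> * \<bar>(a s x - a t x) / (s - t)\<bar> \<le> \<bar>s - t\<bar> * M"
        using elim by (intro mult_left_mono) auto
      then show ?case using eq[of x] sM by linarith
    qed
    then show ?case using i l1 by simp
  qed
qed


lemma alg: fixes A B C d E F G :: real shows "d \<noteq> 0 \<Longrightarrow> ((A - B)/d - C) * E + C*(E - F) + B*((E - F)/d - G) = (A*E - B*F)/d - (C*F + B*G)"
  by (simp add: field_simps)

lemma int_mult:
  assumes f: "integrable lborel f" and g: "inLIL g"
  shows "integrable lborel (\<lambda>x. f x * g x)"
proof -
  obtain M where M: "M \<ge> 0" "AE x in lborel. \<bar>g x\<bar> \<le> M" using inLIL_bound[OF g] by blast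
  have [measurable]: "f \<in> borel_measurable borel" using borel_measurable_integrable[OF f] by simp
  have [measurable]: "g \<in> borel_measurable borel" using g by (simp add: inLIL_def)
  show ?thesis
  proof (rule Bochner_Integration.integrable_bound)
    show "integrable lborel (\<lambda>x. M * f x)" using f by simp
    show "(\<lambda>x. f x * g x) \<in> borel_measurable lborel" by simp
    show "AE x in lborel. norm (f x * g x) \<le> norm (M * f x)"
      using M(2)
    proof eventually_elim
      case (elim x)
      have "\<bar>f x\<bar> * \<bar>g x\<bar> \<le> \<bar>f x\<bar> * M" using elim by (intro mult_left_mono) auto
      then show ?case using M(1) by (simp add: abs_mult mult.commute)
    qed
  qed
qed

lemma int_mult':
  assumes f: "integrable lborel f" and g: "inLIL g"
  shows "integrable lborel (\<lambda>x. g x * f x)"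
  using int_mult[OF f g] by (simp add: mult.commute)

lemma prod_deriv:
  assumes a: "\<And>t. t \<ge> 0 \<Longrightarrow> inLIL (a t)" "\<And>t. t \<ge> 0 \<Longrightarrow> inLIL (a1 t)" "X_has_deriv a a1"
    and b: "\<And>t. t \<ge> 0 \<Longrightarrow> inLIL (b t)" "\<And>t. t \<ge> 0 \<Longrightarrow> inLIL (b1 t)" "X_has_deriv b b1"
    and t: "t \<ge> 0"
  shows "((\<lambda>s. LINT x|lborel. a s x * b s x) has_real_derivative
          (LINT x|lborel. a1 t x * b t x + a t x * b1 t x)) (at t within {0..})"
proof -
  let ?F = "at t within {0..}"
  let ?A = "\<lambda>s. LINT x|lborel. a s x * b s x"
  let ?D = "LINT x|lborel. a1 t x * b t x + a t x * b1 t x"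
  let ?T1 = "\<lambda>s. LINT x|lborel. ((a s x - a t x) / (s - t) - a1 t x) * b s x"
  let ?T2 = "\<lambda>s. LINT x|lborel. a1 t x * (b s x - b t x)"
  let ?T3 = "\<lambda>s. LINT x|lborel. a t x * ((b s x - b t x) / (s - t) - b1 t x)"
  have s1: "smallX ?F (\<lambda>s x. (a s x - a t x) / (s - t) - a1 t x)" by (rule deriv_small[OF a t])
  have s2: "smallX ?F (\<lambda>s x. (b s x - b t x) / (s - t) - b1 t x)" by (rule deriv_small[OF b t])
  have s3: "smallX ?F (\<lambda>s x. b s x - b t x)" by (rule curve_cont[OF b t])
  obtain Gb where Gb: "AE x in lborel. \<bar>b t x\<bar> \<le> Gb" using inLIL_bound[OF b(1)[OF t]] by blast
  have bb: "bndX ?F b (1 + max (LINT x|lborel. \<bar>b t x\<bar>) Gb)"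
    by (rule small_bnd[OF s3 inLIL_int[OF b(1)[OF t]] Gb])
  obtain M1 where M1: "bndX ?F (\<lambda>s. a1 t) M1" using bnd_inLIL[OF a(2)[OF t]] by blast
  obtain M2 where M2: "bndX ?F (\<lambda>s. a t) M2" using bnd_inLIL[OF a(1)[OF t]] by blast
  have T1: "(?T1 \<longlongrightarrow> 0) ?F" by (rule small_bnd_lim[OF s1 bb])
  have T2: "(?T2 \<longlongrightarrow> 0) ?F" by (rule small_bnd_lim2[OF s3 M1])
  have T3: "(?T3 \<longlongrightarrow> 0) ?F" by (rule small_bnd_lim2[OF s2 M2])
  have sum: "((\<lambda>s. ?T1 s + ?T2 s + ?T3 s) \<longlongrightarrow> 0) ?F"
    using tendsto_add[OF tendsto_add[OF T1 T2] T3] by simp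
  have eq: "eventually (\<lambda>s. ?T1 s + ?T2 s + ?T3 s = (?A s - ?A t) / (s - t) - ?D) ?F"
    using ev_within[of t]
  proof eventually_elim
    case (elim s)
    have st: "s - t \<noteq> 0" using elim by simp
    have L: "inLIL (a s)" "inLIL (a t)" "inLIL (a1 t)" "inLIL (b s)" "inLIL (b t)" "inLIL (b1 t)"
      using a b elim t by auto
    note I = L[THEN inLIL_int]
    have i1: "integrable lborel (\<lambda>x. ((a s x - a t x) / (s - t) - a1 t x) * b s x)"
      by (rule int_mult[OF _ L(4)]) (use I in simp)
    have i2: "integrable lborel (\<lambda>x. a1 t x * (b s x - b t x))"
      by (rule int_mult'[OF _ L(3)]) (use I in simp)
    have i3: "integrable lborel (\<lambda>x. a t x * ((b s x - b t x) / (s - t) - b1 t x))"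
      by (rule int_mult'[OF _ L(2)]) (use I in simp)
    have i4: "integrable lborel (\<lambda>x. a s x * b s x)" by (rule int_mult[OF I(1) L(4)])
    have i5: "integrable lborel (\<lambda>x. a t x * b t x)" by (rule int_mult[OF I(2) L(5)])
    have i6: "integrable lborel (\<lambda>x. a1 t x * b t x)" by (rule int_mult[OF I(3) L(5)])
    have i7: "integrable lborel (\<lambda>x. a t x * b1 t x)" by (rule int_mult[OF I(2) L(6)])
    have "?T1 s + ?T2 s + ?T3 s = (LINT x|lborel. ((a s x - a t x) / (s - t) - a1 t x) * b s x
        + a1 t x * (b s x - b t x) + a t x * ((b s x - b t x) / (s - t) - b1 t x))"
      using i1 i2 i3 by simp
    also have "\<dots> = (LINT x|lborel. (a s x * b s x - a t x * b t x) / (s - t)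
        - (a1 t x * b t x + a t x * b1 t x))"
      by (rule Bochner_Integration.integral_cong) (use st alg in auto)
    also have "\<dots> = (?A s - ?A t) / (s - t) - ?D"
      using i4 i5 i6 i7 by simp
    finally show ?case .
  qed
  have "((\<lambda>s. (?A s - ?A t) / (s - t) - ?D) \<longlongrightarrow> 0) ?F"
    using Lim_transform_eventually[OF sum eq] .
  then have "((\<lambda>s. ((?A s - ?A t) / (s - t) - ?D) + ?D) \<longlongrightarrow> 0 + ?D) ?F"
    by (intro tendsto_intros)
  then have "((\<lambda>s. (?A s - ?A t) / (s - t)) \<longlongrightarrow> ?D) ?F" by simp
  then show ?thesis by (simp add: has_field_derivative_iff)
qed


abbreviation PP :: "(real \<times> real) measure" where
  "PP \<equiv> (lborel::real measure) \<Otimes>\<^sub>M (lborel::real measure)"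

locale kern =
  fixes \<beta> :: "real \<Rightarrow> real"
  assumes beven: "\<And>z. \<beta> (- z) = \<beta> z"
    and bnn: "\<And>z. \<beta> z \<ge> 0"
    and bint: "integrable lborel \<beta>"
    and bmeas[measurable]: "\<beta> \<in> borel_measurable borel"
begin

definition kb :: real where "kb = (LINT z|lborel. \<beta> z)"

lemma kb_nonneg: "kb \<ge> 0"
  unfolding kb_def by (rule integral_nonneg_AE) (simp add: bnn)

lemma bswap: "\<beta> (x - y) = \<beta> (y - x)"
  using beven[of "y - x"] by simp

lemma kernel_int_fst:
  assumes h: "integrable lborel h"
  shows "integrable PP (\<lambda>p. \<beta> (snd p - fst p) * h (fst p))"
proof (rule lborel_pair.Fubini_integrable)
  have [measurable]: "h \<in> borel_measurable borel" using borel_measurable_integrable[OF h] by simp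
  show "(\<lambda>p. \<beta> (snd p - fst p) * h (fst p)) \<in> borel_measurable PP" by measurable
  have "(\<lambda>x. LINT y|lborel. norm (\<beta> (snd (x, y) - fst (x, y)) * h (fst (x, y)))) = (\<lambda>x. \<bar>h x\<bar> * kb)"
  proof
    fix x
    have "(LINT y|lborel. norm (\<beta> (snd (x, y) - fst (x, y)) * h (fst (x, y))))
        = (LINT y|lborel. \<beta> (y - x) * \<bar>h x\<bar>)"
      by (simp add: abs_mult bnn)
    also have "\<dots> = (LINT y|lborel. \<beta> (y - x)) * \<bar>h x\<bar>" by simp
    also have "\<dots> = \<bar>h x\<bar> * kb" by (simp add: integral_translate kb_def)
    finally show "(LINT y|lborel. norm (\<beta> (snd (x, y) - fst (x, y)) * h (fst (x, y)))) = \<bar>h x\<bar> * kb" .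
  qed
  then show "integrable lborel (\<lambda>x. LINT y|lborel. norm (\<beta> (snd (x, y) - fst (x, y)) * h (fst (x, y))))"
    using h by simp
  show "AE x in lborel. integrable lborel (\<lambda>y. \<beta> (snd (x, y) - fst (x, y)) * h (fst (x, y)))"
    using integrable_translate[OF bint] by simp
qed

lemma kernel_integral_fst:
  assumes h: "integrable lborel h"
  shows "integral\<^sup>L PP (\<lambda>p. \<beta> (snd p - fst p) * h (fst p)) = kb * (LINT x|lborel. h x)"
proof -
  have "integral\<^sup>L PP (\<lambda>p. \<beta> (snd p - fst p) * h (fst p))
      = (LINT x|lborel. LINT y|lborel. \<beta> (snd (x, y) - fst (x, y)) * h (fst (x, y)))"
    by (rule lborel_pair.integral_fst'[symmetric, OF kernel_int_fst[OF h]])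
  also have "\<dots> = (LINT x|lborel. kb * h x)"
    by (simp add: integral_translate kb_def)
  finally show ?thesis by simp
qed

lemma swap_fun: "(\<lambda>(x, y). f (y, x)) = (\<lambda>p. f (snd p, fst p))"
  by auto

lemma kernel_int_snd:
  assumes h: "integrable lborel h"
  shows "integrable PP (\<lambda>p. \<beta> (snd p - fst p) * h (snd p))"
proof -
  have eq: "(\<lambda>(x, y). (\<lambda>p. \<beta> (snd p - fst p) * h (snd p)) (y, x)) = (\<lambda>p. \<beta> (snd p - fst p) * h (fst p))"
    by (rule ext) (auto simp: bswap split: prod.splits)
  have "integrable PP (\<lambda>(x, y). (\<lambda>p. \<beta> (snd p - fst p) * h (snd p)) (y, x))"
    unfolding eq by (rule kernel_int_fst[OF h])
  then show ?thesis using lborel_pair.integrable_product_swap_iff[of "\<lambda>p. \<beta> (snd p - fst p) * h (snd p)"] by simp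
qed

lemma integral_swap:
  fixes f :: "real \<times> real \<Rightarrow> real"
  assumes [measurable]: "f \<in> borel_measurable PP"
  shows "integral\<^sup>L PP f = integral\<^sup>L PP (\<lambda>p. f (snd p, fst p))"
  using lborel_pair.integral_product_swap[OF assms] by (simp add: swap_fun)

lemma kernel_integral_snd:
  assumes h: "integrable lborel h"
  shows "integral\<^sup>L PP (\<lambda>p. \<beta> (snd p - fst p) * h (snd p)) = kb * (LINT x|lborel. h x)"
proof -
  have [measurable]: "h \<in> borel_measurable borel" using borel_measurable_integrable[OF h] by simp
  have "integral\<^sup>L PP (\<lambda>p. \<beta> (snd p - fst p) * h (snd p)) = integral\<^sup>L PP (\<lambda>p. \<beta> (fst p - snd p) * h (fst p))"
    by (subst integral_swap) auto
  also have "\<dots> = integral\<^sup>L PP (\<lambda>p. \<beta> (snd p - fst p) * h (fst p))"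
    by (simp add: bswap)
  finally show ?thesis using kernel_integral_fst[OF h] by simp
qed

lemma kernel_bound:
  assumes F[measurable]: "F \<in> borel_measurable PP" and g: "integrable lborel g"
    and ae: "AE p in PP. \<bar>F p\<bar> \<le> \<beta> (snd p - fst p) * (g (snd p) + g (fst p))"
  shows "integrable PP F" "\<bar>integral\<^sup>L PP F\<bar> \<le> 2 * kb * (LINT x|lborel. g x)"
proof -
  let ?B = "\<lambda>p. \<beta> (snd p - fst p) * g (snd p) + \<beta> (snd p - fst p) * g (fst p)"
  have iB: "integrable PP ?B"
    using kernel_int_snd[OF g] kernel_int_fst[OF g] by simp
  show iF: "integrable PP F"
  proof (rule Bochner_Integration.integrable_bound[OF iB])
    show "AE p in PP. norm (F p) \<le> norm (?B p)"
      using ae by eventually_elim (auto simp: distrib_left)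
  qed simp
  have "\<bar>integral\<^sup>L PP F\<bar> \<le> integral\<^sup>L PP (\<lambda>p. \<bar>F p\<bar>)" by (rule integral_abs_bound)
  also have "\<dots> \<le> integral\<^sup>L PP ?B"
  proof (rule integral_mono_AE')
    show "AE p in PP. \<bar>F p\<bar> \<le> ?B p" using ae by eventually_elim (auto simp: distrib_left)
    then show "AE p in PP. 0 \<le> ?B p" by eventually_elim auto
  qed (rule iB)
  also have "\<dots> = 2 * kb * (LINT x|lborel. g x)"
    using kernel_integral_snd[OF g] kernel_integral_fst[OF g] kernel_int_snd[OF g] kernel_int_fst[OF g]
    by simp
  finally show "\<bar>integral\<^sup>L PP F\<bar> \<le> 2 * kb * (LINT x|lborel. g x)" .
qed

end


locale pot = kern \<beta> for \<beta> :: "real \<Rightarrow> real" +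
  fixes w w' :: "real \<Rightarrow> real"
  assumes wd: "\<And>x. (w has_real_derivative w' x) (at x)"
    and w'cont: "continuous_on UNIV w'"
    and wodd: "\<And>x. w (- x) = - w x"
begin

lemma wcont: "continuous_on UNIV w"
  using wd by (intro continuous_at_imp_continuous_on) (auto intro: DERIV_isCont)

lemma wmeas[measurable]: "w \<in> borel_measurable borel"
  by (rule borel_measurable_continuous_onI[OF wcont])

lemma Wd: "(Wpot w has_real_derivative w x) (at x)"
  by (rule W_deriv[OF wcont])

lemma Wcont: "continuous_on UNIV (Wpot w)"
  using Wd by (intro continuous_at_imp_continuous_on) (auto intro: DERIV_isCont)

lemma Wmeas[measurable]: "Wpot w \<in> borel_measurable borel"
  by (rule borel_measurable_continuous_onI[OF Wcont])

lemma w_bound: "\<exists>C\<ge>0. \<forall>x. \<bar>x\<bar> \<le> R \<longrightarrow> \<bar>w x\<bar> \<le> C"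
  by (rule cont_bound[OF wcont])

lemma W_lin: "\<exists>C\<ge>0. \<forall>x. \<bar>x\<bar> \<le> R \<longrightarrow> \<bar>Wpot w x\<bar> \<le> C * \<bar>x\<bar>"
proof -
  obtain C where C: "C \<ge> 0" "\<And>x. \<bar>x\<bar> \<le> R \<Longrightarrow> \<bar>w x\<bar> \<le> C" using w_bound[of R] by blast
  have "\<bar>Wpot w x\<bar> \<le> C * \<bar>x\<bar>" if x: "\<bar>x\<bar> \<le> R" for x
  proof -
    have "\<bar>Wpot w x - Wpot w 0\<bar> \<le> C * \<bar>x - 0\<bar>"
      by (rule lip_deriv[where lo="-R" and hi=R and f'=w]) (use Wd C x in auto)
    then show ?thesis by (simp add: W_0)
  qed
  then show ?thesis using C by blast
qed

lemma W_taylor: "\<exists>K\<ge>0. \<forall>a b. \<bar>a\<bar> \<le> R \<longrightarrow> \<bar>b\<bar> \<le> R \<longrightarrow>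
    \<bar>Wpot w b - Wpot w a - w a * (b - a)\<bar> \<le> K * (b - a)^2"
proof -
  obtain K where K: "K \<ge> 0" "\<And>x. \<bar>x\<bar> \<le> R \<Longrightarrow> \<bar>w' x\<bar> \<le> K" using cont_bound[OF w'cont, of R] by blast
  have wl: "\<bar>w c - w a\<bar> \<le> K * \<bar>c - a\<bar>" if "\<bar>a\<bar> \<le> R" "\<bar>c\<bar> \<le> R" for a c
    by (rule lip_deriv[where lo="-R" and hi=R and f'=w']) (use wd K that in auto)
  have "\<bar>Wpot w b - Wpot w a - w a * (b - a)\<bar> \<le> K * (b - a)^2" if ab: "\<bar>a\<bar> \<le> R" "\<bar>b\<bar> \<le> R" for a b
  proof -
    let ?g = "\<lambda>x. Wpot w x - w a * x"
    have "\<bar>?g b - ?g a\<bar> \<le> (K * \<bar>b - a\<bar>) * \<bar>b - a\<bar>"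
    proof (rule lip_deriv[where lo="min a b" and hi="max a b" and f'="\<lambda>x. w x - w a"])
      fix x assume x: "min a b \<le> x" "x \<le> max a b"
      show "(?g has_real_derivative w x - w a) (at x)"
        by (auto intro!: derivative_eq_intros Wd)
      have "\<bar>x\<bar> \<le> R" using x ab by auto
      then have "\<bar>w x - w a\<bar> \<le> K * \<bar>x - a\<bar>" using wl ab by auto
      also have "\<dots> \<le> K * \<bar>b - a\<bar>" using x K by (intro mult_left_mono) auto
      finally show "\<bar>w x - w a\<bar> \<le> K * \<bar>b - a\<bar>" .
    qed auto
    then show ?thesis by (simp add: power2_eq_square algebra_simps)
  qed
  then show ?thesis using K by blast
qed

definition Pot :: "(real \<Rightarrow> real) \<Rightarrow> real" where
  "Pot f = (LINT x|lborel. LINT y|lborel. \<beta> (y - x) * Wpot w (f y - f x))"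

definition PF :: "(real \<Rightarrow> real) \<Rightarrow> real \<times> real \<Rightarrow> real" where
  "PF f p = \<beta> (snd p - fst p) * Wpot w (f (snd p) - f (fst p))"

lemma AE_pair_bound:
  assumes "AE x in lborel. \<bar>f x\<bar> \<le> M"
  shows "AE p in PP. \<bar>f (fst p)\<bar> \<le> M \<and> \<bar>f (snd p)\<bar> \<le> M"
  using AE_pair_fst[OF assms] AE_pair_snd[OF assms] by eventually_elim auto

lemma Pot_prod:
  assumes f: "inLIL f"
  shows "integrable PP (PF f)" "Pot f = integral\<^sup>L PP (PF f)"
proof -
  have [measurable]: "f \<in> borel_measurable borel" using f by (simp add: inLIL_def)
  obtain M where M: "M \<ge> 0" "AE x in lborel. \<bar>f x\<bar> \<le> M" using inLIL_bound[OF f] by blast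
  obtain C where C: "C \<ge> 0" "\<And>x. \<bar>x\<bar> \<le> 2 * M \<Longrightarrow> \<bar>Wpot w x\<bar> \<le> C * \<bar>x\<bar>" using W_lin[of "2*M"] by blast
  have g: "integrable lborel (\<lambda>x. C * \<bar>f x\<bar>)" using inLIL_int[OF f] by simp
  show i: "integrable PP (PF f)"
  proof (rule kernel_bound(1)[OF _ g])
    show "PF f \<in> borel_measurable PP" unfolding PF_def by measurable
    show "AE p in PP. \<bar>PF f p\<bar> \<le> \<beta> (snd p - fst p) * (C * \<bar>f (snd p)\<bar> + C * \<bar>f (fst p)\<bar>)"
      using AE_pair_bound[OF M(2)]
    proof eventually_elim
      case (elim p)
      have "\<bar>Wpot w (f (snd p) - f (fst p))\<bar> \<le> C * \<bar>f (snd p) - f (fst p)\<bar>"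
        using elim by (intro C(2)) auto
      also have "\<dots> \<le> C * \<bar>f (snd p)\<bar> + C * \<bar>f (fst p)\<bar>"
        using C(1) by (simp add: distrib_left[symmetric] mult_left_mono abs_triangle_ineq4)
      finally have "\<beta> (snd p - fst p) * \<bar>Wpot w (f (snd p) - f (fst p))\<bar>
          \<le> \<beta> (snd p - fst p) * (C * \<bar>f (snd p)\<bar> + C * \<bar>f (fst p)\<bar>)"
        by (rule mult_left_mono[OF _ bnn])
      then show ?case unfolding PF_def abs_mult by (simp add: abs_of_nonneg bnn)
    qed
  qed
  show "Pot f = integral\<^sup>L PP (PF f)"
    unfolding Pot_def using lborel_pair.integral_fst'[OF i] by (simp add: PF_def)
qed

end


lemma pw:
  fixes Wa Wb wa a b d qy qx vy vx K Cw \<delta> :: real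
  assumes T: "\<bar>Wb - Wa - wa * (b - a)\<bar> \<le> K * (b - a)^2" and wa: "\<bar>wa\<bar> \<le> Cw"
    and ba: "b - a = d * qy - d * qx" and dy: "\<bar>d * qy\<bar> \<le> \<delta>" and dx: "\<bar>d * qx\<bar> \<le> \<delta>"
    and d: "d \<noteq> 0" and K: "K \<ge> 0"
  shows "\<bar>(Wb - Wa) / d - wa * (vy - vx)\<bar> \<le>
     (2*K*\<delta>*\<bar>qy\<bar> + Cw*\<bar>qy - vy\<bar>) + (2*K*\<delta>*\<bar>qx\<bar> + Cw*\<bar>qx - vx\<bar>)"
proof -
  have b: "b - a = d*(qy-qx)" using ba by (simp add: algebra_simps)
  have h1: "(Wb - Wa - wa * (b - a)) / d = (Wb - Wa) / d - wa * (qy - qx)"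
    using d unfolding b by (simp add: diff_divide_distrib)
  have eq: "(Wb - Wa) / d - wa * (vy - vx) = (Wb - Wa - wa * (b - a)) / d + wa * ((qy - vy) - (qx - vx))"
    unfolding h1 by (simp add: algebra_simps)
  have bd: "\<bar>b - a\<bar> = \<bar>d\<bar> * \<bar>qy - qx\<bar>" unfolding b by (simp add: abs_mult)
  have sq: "(b - a)^2 = \<bar>d\<bar> * (\<bar>b - a\<bar> * \<bar>qy - qx\<bar>)"
  proof -
    have "(b - a)^2 = \<bar>b - a\<bar> * \<bar>b - a\<bar>" by (simp add: power2_eq_square)
    also have "\<dots> = \<bar>d\<bar> * (\<bar>b - a\<bar> * \<bar>qy - qx\<bar>)" by (subst (2) bd) (simp add: ac_simps)
    finally show ?thesis .
  qed
  have "\<bar>(Wb - Wa - wa * (b - a)) / d\<bar> = \<bar>Wb - Wa - wa * (b - a)\<bar> / \<bar>d\<bar>"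
    by (simp add: abs_divide)
  also have "\<dots> \<le> K * (b - a)^2 / \<bar>d\<bar>"
    using T by (intro divide_right_mono) auto
  also have "K * (b - a)^2 / \<bar>d\<bar> = K * (\<bar>b - a\<bar> * \<bar>qy - qx\<bar>)"
    unfolding sq using d by simp
  also have "\<dots> \<le> K * ((\<delta> + \<delta>) * (\<bar>qy\<bar> + \<bar>qx\<bar>))"
  proof (intro mult_left_mono mult_mono K)
    show "\<bar>b - a\<bar> \<le> \<delta> + \<delta>" unfolding ba using dy dx by linarith
    show "\<bar>qy - qx\<bar> \<le> \<bar>qy\<bar> + \<bar>qx\<bar>" by linarith
  qed (use dy in auto)
  finally have A: "\<bar>(Wb - Wa - wa * (b - a)) / d\<bar> \<le> 2*K*\<delta>*\<bar>qy\<bar> + 2*K*\<delta>*\<bar>qx\<bar>"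
    by (simp add: algebra_simps)
  have "\<bar>wa * ((qy - vy) - (qx - vx))\<bar> \<le> Cw * (\<bar>qy - vy\<bar> + \<bar>qx - vx\<bar>)"
    unfolding abs_mult by (intro mult_mono) (use wa in auto)
  then show ?thesis using A abs_triangle_ineq[of "(Wb - Wa - wa*(b-a))/d" "wa*((qy-vy)-(qx-vx))"]
    unfolding eq by (simp add: algebra_simps)
qed

context pot begin

definition DF :: "(real \<Rightarrow> real) \<Rightarrow> (real \<Rightarrow> real) \<Rightarrow> real \<times> real \<Rightarrow> real" where
  "DF f v p = \<beta> (snd p - fst p) * w (f (snd p) - f (fst p)) * (v (snd p) - v (fst p))"

lemma DF_int:
  assumes f: "inLIL f" and v: "integrable lborel v"
  shows "integrable PP (DF f v)"
proof -
  have [measurable]: "f \<in> borel_measurable borel" using f by (simp add: inLIL_def)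
  have [measurable]: "v \<in> borel_measurable borel" using borel_measurable_integrable[OF v] by simp
  obtain M where M: "M \<ge> 0" "AE x in lborel. \<bar>f x\<bar> \<le> M" using inLIL_bound[OF f] by blast
  obtain C where C: "C \<ge> 0" "\<And>x. \<bar>x\<bar> \<le> 2 * M \<Longrightarrow> \<bar>w x\<bar> \<le> C" using w_bound[of "2*M"] by blast
  have g: "integrable lborel (\<lambda>x. C * \<bar>v x\<bar>)" using v by simp
  show ?thesis
  proof (rule kernel_bound(1)[OF _ g])
    show "DF f v \<in> borel_measurable PP" unfolding DF_def by measurable
    show "AE p in PP. \<bar>DF f v p\<bar> \<le> \<beta> (snd p - fst p) * (C * \<bar>v (snd p)\<bar> + C * \<bar>v (fst p)\<bar>)"
      using AE_pair_bound[OF M(2)]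
    proof eventually_elim
      case (elim p)
      have "\<bar>w (f (snd p) - f (fst p))\<bar> \<le> C" using elim by (intro C(2)) auto
      then have "\<bar>w (f (snd p) - f (fst p))\<bar> * \<bar>v (snd p) - v (fst p)\<bar> \<le> C * (\<bar>v (snd p)\<bar> + \<bar>v (fst p)\<bar>)"
        by (intro mult_mono) (auto simp: C(1))
      then have "\<beta> (snd p - fst p) * (\<bar>w (f (snd p) - f (fst p))\<bar> * \<bar>v (snd p) - v (fst p)\<bar>)
          \<le> \<beta> (snd p - fst p) * (C * (\<bar>v (snd p)\<bar> + \<bar>v (fst p)\<bar>))"
        by (rule mult_left_mono[OF _ bnn])
      then show ?case unfolding DF_def abs_mult by (simp add: abs_of_nonneg bnn distrib_left)
    qed
  qed
qed

lemma Pot_deriv: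
  assumes u: "\<And>t. t \<ge> 0 \<Longrightarrow> inLIL (u t)" "\<And>t. t \<ge> 0 \<Longrightarrow> inLIL (u1 t)" "X_has_deriv u u1"
    and t: "t \<ge> 0"
  shows "((\<lambda>s. Pot (u s)) has_real_derivative integral\<^sup>L PP (DF (u t) (u1 t))) (at t within {0..})"
proof -
  let ?F = "at t within {0..}"
  define f0 where "f0 = u t"
  define v where "v = u1 t"
  have f0L: "inLIL f0" and vL: "inLIL v" using u t by (auto simp: f0_def v_def)
  have [measurable]: "f0 \<in> borel_measurable borel" "v \<in> borel_measurable borel"
    using f0L vL by (auto simp: inLIL_def)
  obtain M where M: "M \<ge> 0" "AE x in lborel. \<bar>f0 x\<bar> \<le> M" using inLIL_bound[OF f0L] by blast
  define R where "R = 2 * M + 2"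
  obtain K where K: "K \<ge> 0" "\<And>a b. \<bar>a\<bar> \<le> R \<Longrightarrow> \<bar>b\<bar> \<le> R \<Longrightarrow>
      \<bar>Wpot w b - Wpot w a - w a * (b - a)\<bar> \<le> K * (b - a)^2"
    using W_taylor[of R] by blast
  obtain Cw where Cw: "Cw \<ge> 0" "\<And>x. \<bar>x\<bar> \<le> R \<Longrightarrow> \<bar>w x\<bar> \<le> Cw" using w_bound[of R] by blast
  have sD: "smallX ?F (\<lambda>s x. u s x - f0 x)" unfolding f0_def by (rule curve_cont[OF u t])
  have sR: "smallX ?F (\<lambda>s x. (u s x - f0 x) / (s - t) - v x)" unfolding f0_def v_def by (rule deriv_small[OF u t])
  obtain Mq where Mq: "Mq > 0" "bndX ?F (\<lambda>s x. (u s x - f0 x) / (s - t)) Mq"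
    unfolding f0_def using curve_bnd[OF u t] by blast
  let ?D0 = "integral\<^sup>L PP (DF f0 v)"
  have iD: "integrable PP (DF f0 v)" by (rule DF_int[OF f0L inLIL_int[OF vL]])
  have kb0: "kb \<ge> 0" by (rule kb_nonneg)
  have lim: "((\<lambda>s. (Pot (u s) - Pot f0) / (s - t) - ?D0) \<longlongrightarrow> 0) ?F"
    unfolding tendsto_iff
  proof (intro allI impI)
    fix e :: real assume e: "e > 0"
    define \<delta> where "\<delta> = min 1 (e / (8 * (kb * K * Mq + 1)))"
    define \<epsilon> where "\<epsilon> = e / (4 * (kb * Cw + 1))"
    have X0: "kb * K * Mq \<ge> 0" using kb0 K Mq by simp
    have X1: "kb * Cw \<ge> 0" using kb0 Cw by simp
    have \<delta>0: "\<delta> > 0" using e X0 by (simp add: \<delta>_def)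
    have \<epsilon>0: "\<epsilon> > 0" using e X1 by (simp add: \<epsilon>_def)
    have ev1: "eventually (\<lambda>s. integrable lborel (\<lambda>x. u s x - f0 x) \<and> (LINT x|lborel. \<bar>u s x - f0 x\<bar>) \<le> \<delta>
      \<and> (AE x in lborel. \<bar>u s x - f0 x\<bar> \<le> \<delta>)) ?F"
      using sD \<delta>0 unfolding smallX_def by auto
    have ev2: "eventually (\<lambda>s. integrable lborel (\<lambda>x. (u s x - f0 x) / (s - t) - v x)
      \<and> (LINT x|lborel. \<bar>(u s x - f0 x) / (s - t) - v x\<bar>) \<le> \<epsilon>
      \<and> (AE x in lborel. \<bar>(u s x - f0 x) / (s - t) - v x\<bar> \<le> \<epsilon>)) ?F"
      using sR \<epsilon>0 unfolding smallX_def by auto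
    show "eventually (\<lambda>s. dist ((Pot (u s) - Pot f0) / (s - t) - ?D0) 0 < e) ?F"
      using ev1 ev2 Mq(2) ev_within[of t] unfolding bndX_def
    proof eventually_elim
      case (elim s)
      define d where "d = s - t"
      have d: "d \<noteq> 0" using elim by (simp add: d_def)
      define q where "q = (\<lambda>x. (u s x - f0 x) / d)"
      have usL: "inLIL (u s)" using u elim by auto
      have [measurable]: "u s \<in> borel_measurable borel" using usL by (simp add: inLIL_def)
      have iq: "integrable lborel q" and lq: "(LINT x|lborel. \<bar>q x\<bar>) \<le> Mq"
        using elim by (auto simp: q_def d_def)
      have ir: "integrable lborel (\<lambda>x. q x - v x)" and lr: "(LINT x|lborel. \<bar>q x - v x\<bar>) \<le> \<epsilon>"
        using elim by (auto simp: q_def d_def)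
      have aeD: "AE x in lborel. \<bar>u s x - f0 x\<bar> \<le> \<delta>" using elim by simp
      define g where "g = (\<lambda>z. 2*K*\<delta>*\<bar>q z\<bar> + Cw*\<bar>q z - v z\<bar>)"
      have ig: "integrable lborel g" unfolding g_def using iq ir by simp
      have Ig: "(LINT x|lborel. g x) = 2*K*\<delta>*(LINT x|lborel. \<bar>q x\<bar>) + Cw*(LINT x|lborel. \<bar>q x - v x\<bar>)"
        unfolding g_def using iq ir by simp
      have i1: "integrable PP (PF (u s))" and P1: "Pot (u s) = integral\<^sup>L PP (PF (u s))"
        using Pot_prod[OF usL] by auto
      have i0: "integrable PP (PF f0)" and P0: "Pot f0 = integral\<^sup>L PP (PF f0)"
        using Pot_prod[OF f0L] by auto
      let ?E = "\<lambda>p. (PF (u s) p - PF f0 p) / d - DF f0 v p"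
      have eqI: "(Pot (u s) - Pot f0) / (s - t) - ?D0 = integral\<^sup>L PP ?E"
        unfolding P1 P0 d_def using i1 i0 iD by simp
      have bnd: "\<bar>integral\<^sup>L PP ?E\<bar> \<le> 2 * kb * (LINT x|lborel. g x)"
      proof (rule kernel_bound(2)[OF _ ig])
        show "?E \<in> borel_measurable PP" unfolding PF_def DF_def by measurable
        show "AE p in PP. \<bar>?E p\<bar> \<le> \<beta> (snd p - fst p) * (g (snd p) + g (fst p))"
          using AE_pair_bound[OF M(2)] AE_pair_bound[OF aeD]
        proof eventually_elim
          case (elim p)
          define a where "a = f0 (snd p) - f0 (fst p)"
          define b where "b = u s (snd p) - u s (fst p)"
          have \<delta>1: "\<delta> \<le> 1" by (simp add: \<delta>_def)
          have aR: "\<bar>a\<bar> \<le> R" using elim M(1) by (auto simp: a_def R_def)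
          have bR: "\<bar>b\<bar> \<le> R" using elim \<delta>1 by (auto simp: b_def R_def)
          have dq: "\<And>z. d * q z = u s z - f0 z" using d by (simp add: q_def)
          have pwr: "\<bar>(Wpot w b - Wpot w a) / d - w a * (v (snd p) - v (fst p))\<bar> \<le>
             (2*K*\<delta>*\<bar>q (snd p)\<bar> + Cw*\<bar>q (snd p) - v (snd p)\<bar>) + (2*K*\<delta>*\<bar>q (fst p)\<bar> + Cw*\<bar>q (fst p) - v (fst p)\<bar>)"
          proof (rule pw)
            show "\<bar>Wpot w b - Wpot w a - w a * (b - a)\<bar> \<le> K * (b - a)^2" by (rule K(2)[OF aR bR])
            show "\<bar>w a\<bar> \<le> Cw" by (rule Cw(2)[OF aR])
            show "b - a = d * q (snd p) - d * q (fst p)" unfolding dq by (simp add: a_def b_def)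
            show "\<bar>d * q (snd p)\<bar> \<le> \<delta>" "\<bar>d * q (fst p)\<bar> \<le> \<delta>" unfolding dq using elim by auto
          qed (use d K in auto)
          have Ep: "?E p = \<beta> (snd p - fst p) * ((Wpot w b - Wpot w a) / d - w a * (v (snd p) - v (fst p)))"
            unfolding PF_def DF_def a_def b_def by (simp add: field_simps)
          have "\<beta> (snd p - fst p) * \<bar>(Wpot w b - Wpot w a) / d - w a * (v (snd p) - v (fst p))\<bar>
              \<le> \<beta> (snd p - fst p) * (g (snd p) + g (fst p))"
            unfolding g_def by (rule mult_left_mono[OF pwr bnn])
          then show ?case unfolding Ep abs_mult by (simp add: abs_of_nonneg bnn)
        qed
      qed
      have "2 * kb * (LINT x|lborel. g x) \<le> 2 * kb * (2*K*\<delta>*Mq + Cw*\<epsilon>)"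
      proof -
        have "2*K*\<delta>*(LINT x|lborel. \<bar>q x\<bar>) \<le> 2*K*\<delta>*Mq"
          using lq K \<delta>0 by (intro mult_left_mono) auto
        moreover have "Cw*(LINT x|lborel. \<bar>q x - v x\<bar>) \<le> Cw*\<epsilon>"
          using lr Cw by (intro mult_left_mono) auto
        ultimately show ?thesis unfolding Ig using kb0 by (intro mult_left_mono) auto
      qed
      also have "\<dots> < e"
      proof -
        have "4 * (kb*K*Mq) * \<delta> \<le> 4 * (kb*K*Mq) * (e / (8 * (kb * K * Mq + 1)))"
          using X0 by (intro mult_left_mono) (auto simp: \<delta>_def)
        also have "\<dots> \<le> e / 2"
          using X0 e by (simp add: field_simps)
        finally have A: "4 * (kb*K*Mq) * \<delta> \<le> e / 2" .
        have "2 * (kb*Cw) * \<epsilon> < e / 2"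
          using X1 e by (simp add: \<epsilon>_def field_simps)
        then show ?thesis using A by (simp add: algebra_simps)
      qed
      finally show ?case using bnd eqI by (simp add: dist_real_def)
    qed
  qed
  then have "((\<lambda>s. ((Pot (u s) - Pot f0) / (s - t) - ?D0) + ?D0) \<longlongrightarrow> 0 + ?D0) ?F"
    by (intro tendsto_intros)
  then have "((\<lambda>s. (Pot (u s) - Pot f0) / (s - t)) \<longlongrightarrow> ?D0) ?F" by simp
  then show ?thesis by (simp add: has_field_derivative_iff f0_def v_def)
qed

end


context pot begin

definition I1 :: "(real \<Rightarrow> real) \<Rightarrow> (real \<Rightarrow> real) \<Rightarrow> real" where
  "I1 f g = integral\<^sup>L PP (\<lambda>p. g (fst p) * (\<beta> (snd p - fst p) * w (f (snd p) - f (fst p))))"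

lemma I_int:
  assumes f: "inLIL f" and gi: "integrable lborel g"
  shows "integrable PP (\<lambda>p. g (fst p) * (\<beta> (snd p - fst p) * w (f (snd p) - f (fst p))))"
    "integrable PP (\<lambda>p. g (snd p) * (\<beta> (snd p - fst p) * w (f (snd p) - f (fst p))))"
proof -
  have [measurable]: "f \<in> borel_measurable borel" using f by (simp add: inLIL_def)
  have [measurable]: "g \<in> borel_measurable borel" using borel_measurable_integrable[OF gi] by simp
  obtain M where M: "M \<ge> 0" "AE x in lborel. \<bar>f x\<bar> \<le> M" using inLIL_bound[OF f] by blast
  obtain C where C: "C \<ge> 0" "\<And>x. \<bar>x\<bar> \<le> 2 * M \<Longrightarrow> \<bar>w x\<bar> \<le> C" using w_bound[of "2*M"] by blast
  have g: "integrable lborel (\<lambda>x. C * \<bar>g x\<bar>)" using gi by simp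
  have ae: "AE p in PP. \<bar>w (f (snd p) - f (fst p))\<bar> \<le> C"
    using AE_pair_bound[OF M(2)] by eventually_elim (intro C(2), auto)
  show "integrable PP (\<lambda>p. g (fst p) * (\<beta> (snd p - fst p) * w (f (snd p) - f (fst p))))"
  proof (rule kernel_bound(1)[OF _ g])
    show "AE p in PP. \<bar>g (fst p) * (\<beta> (snd p - fst p) * w (f (snd p) - f (fst p)))\<bar>
        \<le> \<beta> (snd p - fst p) * (C * \<bar>g (snd p)\<bar> + C * \<bar>g (fst p)\<bar>)"
      using ae
    proof eventually_elim
      case (elim p)
      have h1: "\<bar>g (fst p)\<bar> * \<bar>w (f (snd p) - f (fst p))\<bar> \<le> C * \<bar>g (fst p)\<bar>"
        using mult_left_mono[OF elim, of "\<bar>g (fst p)\<bar>"] by (simp add: mult.commute)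
      have "0 \<le> C * \<bar>g (snd p)\<bar>" using C(1) by simp
      then have "\<bar>g (fst p)\<bar> * \<bar>w (f (snd p) - f (fst p))\<bar> \<le> C * \<bar>g (snd p)\<bar> + C * \<bar>g (fst p)\<bar>"
        using h1 by linarith
      from mult_left_mono[OF this bnn[of "snd p - fst p"]]
      show ?case by (simp add: abs_mult abs_of_nonneg bnn ac_simps)
    qed
  qed measurable
  show "integrable PP (\<lambda>p. g (snd p) * (\<beta> (snd p - fst p) * w (f (snd p) - f (fst p))))"
  proof (rule kernel_bound(1)[OF _ g])
    show "AE p in PP. \<bar>g (snd p) * (\<beta> (snd p - fst p) * w (f (snd p) - f (fst p)))\<bar>
        \<le> \<beta> (snd p - fst p) * (C * \<bar>g (snd p)\<bar> + C * \<bar>g (fst p)\<bar>)"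
      using ae
    proof eventually_elim
      case (elim p)
      have h1: "\<bar>g (snd p)\<bar> * \<bar>w (f (snd p) - f (fst p))\<bar> \<le> C * \<bar>g (snd p)\<bar>"
        using mult_left_mono[OF elim, of "\<bar>g (snd p)\<bar>"] by (simp add: mult.commute)
      have "0 \<le> C * \<bar>g (fst p)\<bar>" using C(1) by simp
      then have "\<bar>g (snd p)\<bar> * \<bar>w (f (snd p) - f (fst p))\<bar> \<le> C * \<bar>g (snd p)\<bar> + C * \<bar>g (fst p)\<bar>"
        using h1 by linarith
      from mult_left_mono[OF this bnn[of "snd p - fst p"]]
      show ?case by (simp add: abs_mult abs_of_nonneg bnn ac_simps)
    qed
  qed measurable
qed

lemma I_swap:
  assumes f: "inLIL f" and gi: "integrable lborel g"
  shows "integral\<^sup>L PP (\<lambda>p. g (snd p) * (\<beta> (snd p - fst p) * w (f (snd p) - f (fst p)))) = - I1 f g"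
proof -
  have [measurable]: "f \<in> borel_measurable borel" using f by (simp add: inLIL_def)
  have [measurable]: "g \<in> borel_measurable borel" using borel_measurable_integrable[OF gi] by simp
  have "integral\<^sup>L PP (\<lambda>p. g (snd p) * (\<beta> (snd p - fst p) * w (f (snd p) - f (fst p))))
      = integral\<^sup>L PP (\<lambda>p. g (fst p) * (\<beta> (fst p - snd p) * w (f (fst p) - f (snd p))))"
    by (subst integral_swap) auto
  also have "\<dots> = integral\<^sup>L PP (\<lambda>p. - (g (fst p) * (\<beta> (snd p - fst p) * w (f (snd p) - f (fst p)))))"
  proof (rule Bochner_Integration.integral_cong[OF refl])
    fix p
    have "w (f (fst p) - f (snd p)) = - w (f (snd p) - f (fst p))"
      using wodd[of "f (snd p) - f (fst p)"] by simp
    then show "g (fst p) * (\<beta> (fst p - snd p) * w (f (fst p) - f (snd p)))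
      = - (g (fst p) * (\<beta> (snd p - fst p) * w (f (snd p) - f (fst p))))" by (simp add: bswap)
  qed
  also have "\<dots> = - I1 f g" by (simp add: I1_def)
  finally show ?thesis .
qed

lemma DF_I1:
  assumes f: "inLIL f" and v: "integrable lborel v"
  shows "integral\<^sup>L PP (DF f v) = - 2 * I1 f v"
proof -
  have "integral\<^sup>L PP (DF f v) = integral\<^sup>L PP (\<lambda>p. v (snd p) * (\<beta> (snd p - fst p) * w (f (snd p) - f (fst p)))
      - v (fst p) * (\<beta> (snd p - fst p) * w (f (snd p) - f (fst p))))"
    by (rule Bochner_Integration.integral_cong[OF refl]) (simp add: DF_def algebra_simps)
  also have "\<dots> = integral\<^sup>L PP (\<lambda>p. v (snd p) * (\<beta> (snd p - fst p) * w (f (snd p) - f (fst p))))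
      - I1 f v"
    unfolding I1_def using I_int[OF f v] by simp
  also have "\<dots> = - 2 * I1 f v" using I_swap[OF f v] by simp
  finally show ?thesis .
qed

lemma I1_inner:
  assumes f: "inLIL f" and gi: "integrable lborel g"
  shows "I1 f g = (LINT x|lborel. g x * (LINT y|lborel. \<beta> (y - x) * w (f y - f x)))"
  unfolding I1_def using lborel_pair.integral_fst'[OF I_int(1)[OF f gi], symmetric] by simp

lemma I1_self:
  assumes f: "inLIL f" and growth: "\<And>\<eta>. \<eta> * w \<eta> \<le> c * Wpot w \<eta>"
  shows "I1 f f \<ge> - (c / 2) * Pot f"
proof -
  have fi: "integrable lborel f" by (rule inLIL_int[OF f])
  have [measurable]: "f \<in> borel_measurable borel" using f by (simp add: inLIL_def)
  have "2 * I1 f f = I1 f f - integral\<^sup>L PP (\<lambda>p. f (snd p) * (\<beta> (snd p - fst p) * w (f (snd p) - f (fst p))))"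
    using I_swap[OF f fi] by simp
  also have "\<dots> = - integral\<^sup>L PP (\<lambda>p. \<beta> (snd p - fst p) * ((f (snd p) - f (fst p)) * w (f (snd p) - f (fst p))))"
    unfolding I1_def using I_int[OF f fi]
    by (simp flip: Bochner_Integration.integral_diff integral_minus) (simp add: algebra_simps)
  finally have eq: "2 * I1 f f = - integral\<^sup>L PP (\<lambda>p. \<beta> (snd p - fst p) * ((f (snd p) - f (fst p)) * w (f (snd p) - f (fst p))))" .
  have iD: "integrable PP (\<lambda>p. \<beta> (snd p - fst p) * ((f (snd p) - f (fst p)) * w (f (snd p) - f (fst p))))"
  proof -
    have "integrable PP (\<lambda>p. f (snd p) * (\<beta> (snd p - fst p) * w (f (snd p) - f (fst p)))
       - f (fst p) * (\<beta> (snd p - fst p) * w (f (snd p) - f (fst p))))"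
      using I_int[OF f fi] by simp
    then show ?thesis by (simp add: algebra_simps)
  qed
  have "integral\<^sup>L PP (\<lambda>p. \<beta> (snd p - fst p) * ((f (snd p) - f (fst p)) * w (f (snd p) - f (fst p))))
      \<le> integral\<^sup>L PP (\<lambda>p. c * PF f p)"
  proof (rule integral_mono[OF iD])
    show "integrable PP (\<lambda>p. c * PF f p)" using Pot_prod(1)[OF f] by simp
    fix p
    show "\<beta> (snd p - fst p) * ((f (snd p) - f (fst p)) * w (f (snd p) - f (fst p))) \<le> c * PF f p"
      unfolding PF_def using mult_left_mono[OF growth[of "f (snd p) - f (fst p)"] bnn[of "snd p - fst p"]]
      by (simp add: ac_simps)
  qed
  also have "\<dots> = c * Pot f" using Pot_prod[OF f] by simp
  finally show ?thesis using eq by (simp add: field_simps)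
qed

end


lemma disc:
  fixes A B C :: real
  assumes "\<And>l. 0 \<le> C - 2*l*A + l^2*B" "B \<ge> 0"
  shows "A^2 \<le> B * C"
proof (cases "B > 0")
  case True
  have "0 \<le> C - 2*(A/B)*A + (A/B)^2*B" by (rule assms(1))
  then have "0 \<le> C - A^2/B" using True by (simp add: power2_eq_square field_simps)
  then show ?thesis using True by (simp add: field_simps)
next
  case False
  then have B: "B = 0" using assms(2) by simp
  show ?thesis
  proof (rule ccontr)
    assume "\<not> ?thesis"
    then have A: "A \<noteq> 0" using B by auto
    have "0 \<le> C - 2*((C+1)/(2*A))*A + ((C+1)/(2*A))^2*B" by (rule assms(1))
    then show False using A B by (simp add: field_simps)
  qed
qed

lemma CS:
  assumes f: "inLIL f" and g: "inLIL g"
  shows "(LINT x|lborel. f x * g x)^2 \<le> (LINT x|lborel. f x * f x) * (LINT x|lborel. g x * g x)"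
proof -
  let ?A = "LINT x|lborel. f x * g x"
  let ?B = "LINT x|lborel. g x * g x"
  let ?C = "LINT x|lborel. f x * f x"
  have i1: "integrable lborel (\<lambda>x. f x * g x)" by (rule int_mult[OF inLIL_int[OF f] g])
  have i2: "integrable lborel (\<lambda>x. g x * g x)" by (rule int_mult[OF inLIL_int[OF g] g])
  have i3: "integrable lborel (\<lambda>x. f x * f x)" by (rule int_mult[OF inLIL_int[OF f] f])
  have "?A^2 \<le> ?B * ?C"
  proof (rule disc)
    fix l :: real
    have "0 \<le> (LINT x|lborel. (f x - l * g x)^2)" by (rule integral_nonneg_AE) simp
    also have "(LINT x|lborel. (f x - l * g x)^2) = (LINT x|lborel. f x * f x - 2 * l * (f x * g x) + l^2 * (g x * g x))"
      by (rule Bochner_Integration.integral_cong[OF refl]) (simp add: power2_eq_square algebra_simps)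
    also have "\<dots> = ?C - 2*l*?A + l^2*?B" using i1 i2 i3 by simp
    finally show "0 \<le> ?C - 2*l*?A + l^2*?B" .
    show "0 \<le> ?B" by (rule integral_nonneg_AE) simp
  qed
  then show ?thesis by (simp add: mult.commute)
qed

lemma mvt0:
  fixes f f' :: "real \<Rightarrow> real"
  assumes "a \<le> b" "{a..b} \<subseteq> S" "\<And>x. a \<le> x \<Longrightarrow> x \<le> b \<Longrightarrow> (f has_real_derivative f' x) (at x within S)"
  shows "\<exists>\<xi>. a \<le> \<xi> \<and> \<xi> \<le> b \<and> f b - f a = f' \<xi> * (b - a)"
proof -
  have "\<exists>x\<in>{a..b}. f b - f a = (\<lambda>h. f' x * h) (b - a)"
  proof (rule mvt_very_simple[OF assms(1)])
    fix x assume x: "a \<le> x" "x \<le> b"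
    have "(f has_real_derivative f' x) (at x within {a..b})"
      by (rule DERIV_subset[OF assms(3)[OF x] assms(2)])
    then show "(f has_derivative (\<lambda>h. f' x * h)) (at x within {a..b})"
      by (simp add: has_field_derivative_def)
  qed
  then show ?thesis by auto
qed

lemma ode_blowup:
  fixes F G H N :: "real \<Rightarrow> real"
  assumes dF: "\<And>t. t \<ge> 0 \<Longrightarrow> (F has_real_derivative 2 * G t) (at t within {0..})"
    and dG: "\<And>t. t \<ge> 0 \<Longrightarrow> (G has_real_derivative H t) (at t within {0..})"
    and F0: "\<And>t. t \<ge> 0 \<Longrightarrow> F t \<ge> 0" and N0: "\<And>t. t \<ge> 0 \<Longrightarrow> N t \<ge> 0"
    and cs: "\<And>t. t \<ge> 0 \<Longrightarrow> (G t)^2 \<le> F t * N t"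
    and Hb: "\<And>t. t \<ge> 0 \<Longrightarrow> H t \<ge> (2 + 2*\<nu>) * N t + c"
    and c: "c > 0" and \<nu>: "\<nu> > 0"
  shows False
proof -
  have Hc: "H t \<ge> c" if "t \<ge> 0" for t
  proof -
    have "(2 + 2*\<nu>) * N t \<ge> 0" using N0[OF that] \<nu> by simp
    then show ?thesis using Hb[OF that] by linarith
  qed
  have Gmono: "G b - G a \<ge> c * (b - a)" if "0 \<le> a" "a \<le> b" for a b
  proof -
    have "\<exists>\<xi>. a \<le> \<xi> \<and> \<xi> \<le> b \<and> G b - G a = H \<xi> * (b - a)"
      by (rule mvt0[OF that(2), where S="{0..}"]) (use that dG in auto)
    then obtain \<xi> where \<xi>: "a \<le> \<xi>" "\<xi> \<le> b" "G b - G a = H \<xi> * (b - a)" by blast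
    have "c * (b - a) \<le> H \<xi> * (b - a)" using Hc[of \<xi>] \<xi> that by (intro mult_right_mono) auto
    then show ?thesis using \<xi> by simp
  qed
  define t0 where "t0 = \<bar>G 0\<bar> / c + 1"
  have t0: "t0 \<ge> 0" using c by (simp add: t0_def)
  have "G t0 - G 0 \<ge> c * t0" using Gmono[of 0 t0] t0 by simp
  moreover have "c * t0 = \<bar>G 0\<bar> + c" using c by (simp add: t0_def field_simps)
  ultimately have Gt0: "G t0 > 0" using c by linarith
  have Gpos: "G t > 0" if "t \<ge> t0" for t
    using Gmono[of t0 t] that t0 Gt0 c by (smt (verit) mult_nonneg_nonneg)
  define m where "m = (\<lambda>t. F t / G t)"
  define m' where "m' = (\<lambda>t. (2 * G t * G t - F t * H t) / (G t * G t))"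
  have dm: "(m has_real_derivative m' t) (at t within {0..})" if "t \<ge> t0" for t
  proof -
    have "((\<lambda>t. F t / G t) has_real_derivative (2 * G t * G t - F t * H t) / (G t * G t)) (at t within {0..})"
      by (rule DERIV_divide[OF dF dG]) (use that t0 Gpos[OF that] in auto)
    then show ?thesis by (simp add: m_def m'_def)
  qed
  have m'b: "m' t \<le> - 2 * \<nu>" if "t \<ge> t0" for t
  proof -
    have t: "t \<ge> 0" using that t0 by simp
    have G: "G t > 0" using Gpos that by simp
    have "F t * H t \<ge> F t * ((2 + 2*\<nu>) * N t + c)" by (rule mult_left_mono[OF Hb[OF t] F0[OF t]])
    moreover have "F t * c \<ge> 0" using F0[OF t] c by simp
    moreover have "(2 + 2*\<nu>) * (F t * N t) \<ge> (2 + 2*\<nu>) * (G t)^2"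
      using cs[OF t] \<nu> by (intro mult_left_mono) auto
    ultimately have FH: "F t * H t \<ge> (2 + 2*\<nu>) * (G t * G t)"
      by (simp add: algebra_simps power2_eq_square)
    have "2 * G t * G t - F t * H t \<le> - 2 * \<nu> * (G t * G t)" using FH by (simp add: algebra_simps)
    then show ?thesis using G by (simp add: m'_def divide_le_eq mult_pos_pos)
  qed
  have m0: "m t \<ge> 0" if "t \<ge> t0" for t
    using F0[of t] Gpos[OF that] that t0 by (simp add: m_def)
  define T where "T = t0 + m t0 / \<nu> + 1"
  have T: "T \<ge> t0" using m0[of t0] \<nu> by (simp add: T_def)
  have "\<exists>\<xi>. t0 \<le> \<xi> \<and> \<xi> \<le> T \<and> m T - m t0 = m' \<xi> * (T - t0)"
    by (rule mvt0[OF T, where S="{0..}"]) (use t0 dm in auto)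
  then obtain \<xi> where \<xi>: "t0 \<le> \<xi>" "\<xi> \<le> T" "m T - m t0 = m' \<xi> * (T - t0)" by blast
  have "m' \<xi> * (T - t0) \<le> (- 2 * \<nu>) * (T - t0)" using m'b[OF \<xi>(1)] T by (intro mult_right_mono) auto
  also have "(- 2 * \<nu>) * (T - t0) = - 2 * m t0 - 2 * \<nu>" using \<nu> by (simp add: T_def field_simps)
  finally have "m T \<le> - m t0 - 2 * \<nu>" using \<xi> by simp
  then show False using m0[of t0] m0[OF T] \<nu> by simp
qed


lemma meas_param:
  fixes f :: "real \<Rightarrow> real \<Rightarrow> real"
  assumes "(\<lambda>p. f (fst p) (snd p)) \<in> borel_measurable PP"
  shows "(\<lambda>x. LINT y|lborel. f x y) \<in> borel_measurable lborel"
  by (rule lborel.borel_measurable_lebesgue_integral) (use assms in \<open>simp add: case_prod_beta'\<close>)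

theorem theorem4p4:
  fixes \<alpha> w \<phi> \<psi> :: "real \<Rightarrow> real" and \<nu> :: real
  assumes alpha_L1: "integrable lborel \<alpha>"
    and alpha_even: "AE x in lborel. \<alpha> (- x) = \<alpha> x"
    and alpha_nonneg: "AE x in lborel. \<alpha> x \<ge> 0"
    and w_C1: "\<exists>w'. continuous_on UNIV w' \<and> (\<forall>x. (w has_real_derivative w' x) (at x))"
    and w_odd: "\<forall>x. w (- x) = - w x"
    and w_0: "w 0 = 0"
    and phi: "inLIL \<phi>" and psi: "inLIL \<psi>"
    and nu: "\<nu> > 0"
    and growth: "\<forall>\<eta>. \<eta> * w \<eta> \<le> 2 * (1 + 2 * \<nu>) * Wpot w \<eta>"
    and neg_energy: "energy0 \<alpha> w \<phi> \<psi> < 0"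
  shows "\<not> (\<exists>u u1 u2. global_solution \<alpha> w \<phi> \<psi> u u1 u2)"
proof
  assume "\<exists>u u1 u2. global_solution \<alpha> w \<phi> \<psi> u u1 u2"
  then obtain u u1 u2 where sol: "global_solution \<alpha> w \<phi> \<psi> u u1 u2" by blast
  obtain w' where w': "continuous_on UNIV w'" "\<And>x. (w has_real_derivative w' x) (at x)"
    using w_C1 by blast
  have am[measurable]: "\<alpha> \<in> borel_measurable borel"
    using borel_measurable_integrable[OF alpha_L1] by simp
  define \<beta> where "\<beta> = (\<lambda>z. max 0 ((\<alpha> z + \<alpha> (- z)) / 2))"
  have bm[measurable]: "\<beta> \<in> borel_measurable borel" unfolding \<beta>_def by measurable
  have am': "integrable lborel (\<lambda>z. \<alpha> (- z))"
    using lborel_integrable_real_affine[OF alpha_L1, of "-1" 0] by simp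
  have bi: "integrable lborel \<beta>"
  proof (rule Bochner_Integration.integrable_bound)
    show "integrable lborel (\<lambda>z. (\<bar>\<alpha> z\<bar> + \<bar>\<alpha> (- z)\<bar>) / 2)" using alpha_L1 am' by simp
    show "AE x in lborel. norm (\<beta> x) \<le> norm ((\<bar>\<alpha> x\<bar> + \<bar>\<alpha> (- x)\<bar>) / 2)"
      by (rule AE_I2) (auto simp: \<beta>_def max_def abs_if)
  qed simp
  interpret P: pot \<beta> w w'
  proof unfold_locales
    show "\<And>z. \<beta> (- z) = \<beta> z" by (simp add: \<beta>_def add.commute)
    show "\<And>z. 0 \<le> \<beta> z" by (simp add: \<beta>_def)
  qed (use bi w' w_odd in auto)
  have aeab: "AE z in lborel. \<alpha> z = \<beta> z"
    using alpha_even alpha_nonneg by eventually_elim (auto simp: \<beta>_def)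
  have aeab': "AE y in lborel. \<alpha> (y - x) = \<beta> (y - x)" for x
    by (rule AE_translate[OF _ aeab]) measurable
  have L: "\<And>t. t \<ge> 0 \<Longrightarrow> inLIL (u t)" "\<And>t. t \<ge> 0 \<Longrightarrow> inLIL (u1 t)" "\<And>t. t \<ge> 0 \<Longrightarrow> inLIL (u2 t)"
    using sol by (auto simp: global_solution_def)
  have du: "X_has_deriv u u1" and du1: "X_has_deriv u1 u2"
    using sol by (auto simp: global_solution_def)
  have eqa: "\<And>t. t \<ge> 0 \<Longrightarrow> AE x in lborel. u2 t x = (LINT y|lborel. \<alpha> (y - x) * w (u t y - u t x))"
    and in0: "AE x in lborel. u 0 x = \<phi> x" and in1: "AE x in lborel. u1 0 x = \<psi> x"
    using sol by (auto simp: global_solution_def)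
  have meas: "\<And>t. t \<ge> 0 \<Longrightarrow> u t \<in> borel_measurable borel" "\<And>t. t \<ge> 0 \<Longrightarrow> u1 t \<in> borel_measurable borel"
    "\<And>t. t \<ge> 0 \<Longrightarrow> u2 t \<in> borel_measurable borel"
    using L by (auto simp: inLIL_def)
  have eqb: "AE x in lborel. u2 t x = (LINT y|lborel. \<beta> (y - x) * w (u t y - u t x))" if t: "t \<ge> 0" for t
  proof -
    have [measurable]: "u t \<in> borel_measurable borel" using meas t by auto
    have "(LINT y|lborel. \<alpha> (y - x) * w (u t y - u t x)) = (LINT y|lborel. \<beta> (y - x) * w (u t y - u t x))" for x
      by (rule integral_cong_AE) (use aeab'[of x] in \<open>auto elim: AE_mp\<close>)
    then show ?thesis using eqa[OF t] by simp
  qed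
  have inner: "(LINT x|lborel. g x * u2 t x) = P.I1 (u t) g" if t: "t \<ge> 0" and g: "inLIL g" for t g
  proof -
    have [measurable]: "u t \<in> borel_measurable borel" "u2 t \<in> borel_measurable borel"
      "g \<in> borel_measurable borel" using meas t g by (auto simp: inLIL_def)
    have "(LINT x|lborel. g x * u2 t x) = (LINT x|lborel. g x * (LINT y|lborel. \<beta> (y - x) * w (u t y - u t x)))"
      by (rule integral_cong_AE) (use eqb[OF t] in \<open>auto elim: AE_mp\<close>)
    then show ?thesis using P.I1_inner[OF L(1)[OF t] inLIL_int[OF g]] by simp
  qed
  define Nf where "Nf = (\<lambda>t. LINT x|lborel. u1 t x * u1 t x)"
  define E where "E = (\<lambda>t. (Nf t + P.Pot (u t)) / 2)"
  define X where "X = (\<lambda>t. LINT x|lborel. u1 t x * u2 t x)"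
  have dE: "(E has_real_derivative 0) (at t within {0..})" if t: "t \<ge> 0" for t
  proof -
    have i1: "integrable lborel (\<lambda>x. u2 t x * u1 t x)" "integrable lborel (\<lambda>x. u1 t x * u2 t x)"
      using int_mult[OF inLIL_int[OF L(3)[OF t]] L(2)[OF t]] int_mult[OF inLIL_int[OF L(2)[OF t]] L(3)[OF t]] by auto
    have "(Nf has_real_derivative (LINT x|lborel. u2 t x * u1 t x + u1 t x * u2 t x)) (at t within {0..})"
      unfolding Nf_def by (rule prod_deriv[OF L(2) L(3) du1 L(2) L(3) du1 t])
    moreover have "(LINT x|lborel. u2 t x * u1 t x + u1 t x * u2 t x) = 2 * X t"
      unfolding X_def using i1 by (simp add: mult.commute)
    ultimately have dN: "(Nf has_real_derivative 2 * X t) (at t within {0..})" by simp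
    have "((\<lambda>s. P.Pot (u s)) has_real_derivative integral\<^sup>L PP (P.DF (u t) (u1 t))) (at t within {0..})"
      by (rule P.Pot_deriv[OF L(1) L(2) du t])
    moreover have "integral\<^sup>L PP (P.DF (u t) (u1 t)) = - 2 * X t"
      using P.DF_I1[OF L(1)[OF t] inLIL_int[OF L(2)[OF t]]] inner[OF t L(2)[OF t]] by (simp add: X_def)
    ultimately have dP: "((\<lambda>s. P.Pot (u s)) has_real_derivative - 2 * X t) (at t within {0..})" by simp
    have "(E has_real_derivative (2 * X t + - 2 * X t) / 2) (at t within {0..})"
      unfolding E_def by (intro DERIV_cdivide DERIV_add dN dP)
    then show ?thesis by simp
  qed
  have Econst: "E t = E 0" if t: "t \<ge> 0" for t
  proof -
    have "\<exists>\<xi>. 0 \<le> \<xi> \<and> \<xi> \<le> t \<and> E t - E 0 = (\<lambda>_. 0) \<xi> * (t - 0)"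
      by (rule mvt0[OF t, where S="{0..}"]) (use dE in auto)
    then show ?thesis by auto
  qed
  have E0: "E 0 = energy0 \<alpha> w \<phi> \<psi>"
  proof -
    have [measurable]: "u 0 \<in> borel_measurable borel" "u1 0 \<in> borel_measurable borel"
      "\<phi> \<in> borel_measurable borel" "\<psi> \<in> borel_measurable borel"
      using meas phi psi by (auto simp: inLIL_def)
    have h1: "(LINT x|lborel. (\<psi> x)\<^sup>2) = Nf 0"
      unfolding Nf_def by (rule integral_cong_AE) (use in1 in \<open>auto simp: power2_eq_square elim: AE_mp\<close>)
    have "(\<lambda>p. \<alpha> (snd p - fst p) * Wpot w (\<phi> (snd p) - \<phi> (fst p))) \<in> borel_measurable PP" by measurable
    from meas_param[of "\<lambda>x y. \<alpha> (y - x) * Wpot w (\<phi> y - \<phi> x)", OF this]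
    have mo1: "(\<lambda>x. LINT y|lborel. \<alpha> (y - x) * Wpot w (\<phi> y - \<phi> x)) \<in> borel_measurable lborel" .
    have "(\<lambda>p. \<beta> (snd p - fst p) * Wpot w (u 0 (snd p) - u 0 (fst p))) \<in> borel_measurable PP" by measurable
    from meas_param[of "\<lambda>x y. \<beta> (y - x) * Wpot w (u 0 y - u 0 x)", OF this]
    have mo2: "(\<lambda>x. LINT y|lborel. \<beta> (y - x) * Wpot w (u 0 y - u 0 x)) \<in> borel_measurable lborel" .
    have h2: "(LINT x|lborel. LINT y|lborel. \<alpha> (y - x) * Wpot w (\<phi> y - \<phi> x)) = P.Pot (u 0)"
      unfolding P.Pot_def
    proof (rule integral_cong_AE[OF mo1 mo2])
      show "AE x in lborel. (LINT y|lborel. \<alpha> (y - x) * Wpot w (\<phi> y - \<phi> x))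
          = (LINT y|lborel. \<beta> (y - x) * Wpot w (u 0 y - u 0 x))"
        using in0
      proof eventually_elim
        case (elim x)
        have ae2: "AE y in lborel. \<alpha> (y - x) * Wpot w (\<phi> y - \<phi> x) = \<beta> (y - x) * Wpot w (u 0 y - u 0 x)"
          using in0 aeab'[of x] by eventually_elim (simp add: elim)
        have m1: "(\<lambda>y. \<alpha> (y - x) * Wpot w (\<phi> y - \<phi> x)) \<in> borel_measurable lborel" by simp
        have m2: "(\<lambda>y. \<beta> (y - x) * Wpot w (u 0 y - u 0 x)) \<in> borel_measurable lborel" by simp
        show ?case by (rule integral_cong_AE[OF m1 m2 ae2])
      qed
    qed
    show ?thesis using h1 h2 unfolding E_def energy0_def by simp
  qed
  define E0v where "E0v = energy0 \<alpha> w \<phi> \<psi>"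
  have potE: "P.Pot (u t) = 2 * E0v - Nf t" if "t \<ge> 0" for t
    using Econst[OF that] E0 by (simp add: E_def E0v_def field_simps)
  define Fq where "Fq = (\<lambda>t. LINT x|lborel. u t x * u t x)"
  define Gq where "Gq = (\<lambda>t. LINT x|lborel. u t x * u1 t x)"
  define Hq where "Hq = (\<lambda>t. Nf t + (LINT x|lborel. u t x * u2 t x))"
  show False
  proof (rule ode_blowup[where F=Fq and G=Gq and H=Hq and N=Nf and \<nu>=\<nu> and c="- 2 * (1 + 2*\<nu>) * E0v"])
    fix t :: real assume t: "t \<ge> 0"
    have i: "integrable lborel (\<lambda>x. u1 t x * u t x)" "integrable lborel (\<lambda>x. u t x * u1 t x)"
      "integrable lborel (\<lambda>x. u1 t x * u1 t x)" "integrable lborel (\<lambda>x. u t x * u2 t x)"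
      using int_mult[OF inLIL_int[OF L(2)[OF t]] L(1)[OF t]] int_mult[OF inLIL_int[OF L(1)[OF t]] L(2)[OF t]]
        int_mult[OF inLIL_int[OF L(2)[OF t]] L(2)[OF t]] int_mult[OF inLIL_int[OF L(1)[OF t]] L(3)[OF t]] by auto
    have "(Fq has_real_derivative (LINT x|lborel. u1 t x * u t x + u t x * u1 t x)) (at t within {0..})"
      unfolding Fq_def by (rule prod_deriv[OF L(1) L(2) du L(1) L(2) du t])
    moreover have "(LINT x|lborel. u1 t x * u t x + u t x * u1 t x) = 2 * Gq t"
      unfolding Gq_def using i by (simp add: mult.commute)
    ultimately show "(Fq has_real_derivative 2 * Gq t) (at t within {0..})" by simp
    have "(Gq has_real_derivative (LINT x|lborel. u1 t x * u1 t x + u t x * u2 t x)) (at t within {0..})"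
      unfolding Gq_def by (rule prod_deriv[OF L(1) L(2) du L(2) L(3) du1 t])
    moreover have "(LINT x|lborel. u1 t x * u1 t x + u t x * u2 t x) = Hq t"
      unfolding Hq_def Nf_def using i by simp
    ultimately show "(Gq has_real_derivative Hq t) (at t within {0..})" by simp
    show "Fq t \<ge> 0" unfolding Fq_def by (rule integral_nonneg_AE) simp
    show "Nf t \<ge> 0" unfolding Nf_def by (rule integral_nonneg_AE) simp
    show "(Gq t)^2 \<le> Fq t * Nf t" unfolding Gq_def Fq_def Nf_def by (rule CS[OF L(1)[OF t] L(2)[OF t]])
    have "(LINT x|lborel. u t x * u2 t x) = P.I1 (u t) (u t)" by (rule inner[OF t L(1)[OF t]])
    also have "\<dots> \<ge> - ((2 * (1 + 2 * \<nu>)) / 2) * P.Pot (u t)"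
      by (rule P.I1_self[OF L(1)[OF t]]) (use growth in auto)
    finally have A: "(LINT x|lborel. u t x * u2 t x) \<ge> - ((2 * (1 + 2 * \<nu>)) / 2) * P.Pot (u t)" .
    have "- ((2 * (1 + 2 * \<nu>)) / 2) * P.Pot (u t) = - (1 + 2 * \<nu>) * (2 * E0v - Nf t)"
      unfolding potE[OF t] by (simp add: field_simps)
    then have "(LINT x|lborel. u t x * u2 t x) \<ge> - (1 + 2 * \<nu>) * (2 * E0v - Nf t)"
      using A by simp
    then show "Hq t \<ge> (2 + 2*\<nu>) * Nf t + - 2 * (1 + 2*\<nu>) * E0v"
      unfolding Hq_def by (simp add: algebra_simps)
  next
    have a: "- 2 * (1 + 2*\<nu>) < 0" using nu by simp
    show "- 2 * (1 + 2*\<nu>) * E0v > 0" using mult_neg_neg[OF a neg_energy] by (simp add: E0v_def)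
  qed (rule nu)
qed


end
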